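(* Let $l<u$ be real, let $\Delta Q$ be real with $0<\Delta Q\le u-l$, and let $\epsilon\ge0$, $0\le\delta<1$ with $\frac{e^\epsilon}{1-\delta}>1$. Let $b_0=\frac{\Delta Q}{\epsilon-\log(1-\delta)}$. Then $f$ is defined and continuous on $[b_0,\infty)$, and there exists a unique $b^*\in[b_0,f(b_0)]$ with $f(b^* )=b^*$. Moreover $b^*=b_0=f(b_0)$ if and only if $\Delta Q=u-l$.
   Context: For $b>0$ and $p\in[l,u]$, $C_p(b)= 1-\frac12\left(e^{-\frac{p-l}{b}}+e^{-\frac{u-p}{b}}\right)$ (the integral $\int_l^u\frac{1}{2b}e^{-|x-p|/b}dx$), and $\Delta C(b)=\frac{C_{l+\Delta Q}(b)}{C_l(b)}$. The map $f$ is defined for $b>0$ with $\epsilon-\log\Delta C(b)-\log(1-\delta)\neq 0$ by $f(b)=\frac{\Delta Q}{\epsilon-\log\Delta C(b)-\log(1-\delta)}$. *)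

theory Defs
  imports "HOL-Analysis.Analysis"
begin

text \<open>C_p(b) = 1 - (exp(-(p-l)/b) + exp(-(u-p)/b))/2, the Laplace(p,b) mass of [l,u].\<close>
definition Cp :: "real \<Rightarrow> real \<Rightarrow> real \<Rightarrow> real \<Rightarrow> real" where
  "Cp l u p b = 1 - (exp (- (p - l) / b) + exp (- (u - p) / b)) / 2"

definition DeltaC :: "real \<Rightarrow> real \<Rightarrow> real \<Rightarrow> real \<Rightarrow> real" where
  "DeltaC l u dQ b = Cp l u (l + dQ) b / Cp l u l b"

definition fmap :: "real \<Rightarrow> real \<Rightarrow> real \<Rightarrow> real \<Rightarrow> real \<Rightarrow> real \<Rightarrow> real" where
  "fmap l u dQ eps delta b = dQ / (eps - ln (DeltaC l u dQ b) - ln (1 - delta))"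

end

theory Submission
  imports Defs
begin

lemma ratio_ge1:
  fixes x y :: real
  assumes "0 < x" "x < 1" "0 < y" "y \<le> 1"
  shows "1 \<le> (2-x-y)/(1-x*y)"
proof -
  have "x*y \<le> x" using assms by (simp add: mult_left_le)
  hence p: "0 < 1 - x*y" using assms by linarith
  have "(1-x)*(1-y) \<ge> 0" using assms by simp
  hence "1 - x*y \<le> 2-x-y" by (simp add: algebra_simps)
  then show ?thesis using p by (simp add: le_divide_eq)
qed

lemma ratio_gt1:
  fixes x y :: real
  assumes "0 < x" "x < 1" "0 < y" "y < 1"
  shows "1 < (2-x-y)/(1-x*y)"
proof -
  have "x*y \<le> x" using assms by (simp add: mult_left_le)
  hence p: "0 < 1 - x*y" using assms by linarith
  have "(1-x)*(1-y) > 0" using assms by simp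
  then show ?thesis using p by (simp add: field_simps)
qed

lemma ratio_lt:
  fixes x y :: real
  assumes "0 < x" "x < 1" "0 < y" "y \<le> 1"
  shows "(2-x-y)/(1-x*y) < 1/x"
proof -
  have "x*y \<le> x" using assms by (simp add: mult_left_le)
  hence p: "0 < 1 - x*y" using assms by linarith
  have "(1-x)^2 > 0" using assms by simp
  then have "x*(2-x-y) < 1 - x*y" by (simp add: power2_eq_square algebra_simps)
  then show ?thesis using p assms by (simp add: field_simps)
qed

lemma ratio_ident:
  fixes x y :: real
  assumes "0 < x" "x < 1" "0 < y" "y < 1"
  shows "(2-x-y)/(1-x*y) = 1 + 1/(1/(1-x) + 1/(1-y) - 1)"
proof -
  have "x*y \<le> x" using assms by (simp add: mult_left_le)
  hence p: "0 < 1 - x*y" using assms by linarith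
  have "(1-x)*(1-y) > 0" using assms by simp
  hence nz: "1 + x*y - (x+y) \<noteq> 0" "1 - x \<noteq> 0" "1 - y \<noteq> 0" using assms
    by (auto simp: algebra_simps)
  have q: "1/(1-x) + 1/(1-y) - 1 = (1-x*y)/((1-x)*(1-y))" using nz
    by (simp add: field_simps)
  have r: "1/((1-x*y)/((1-x)*(1-y))) = (1-x)*(1-y)/(1-x*y)" by simp
  have s: "(2-x-y)/(1-x*y) = 1 + (1-x)*(1-y)/(1-x*y)" using p
    by (simp add: field_simps)
  show ?thesis unfolding q r s ..
qed

lemma ratio_mono:
  fixes x1 x2 y1 y2 :: real
  assumes "0 < x1" "x1 \<le> x2" "x2 < 1" "0 < y1" "y1 \<le> y2" "y2 < 1"
  shows "(2-x2-y2)/(1-x2*y2) \<le> (2-x1-y1)/(1-x1*y1)"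
proof -
  have a: "1/(1-x1) \<le> 1/(1-x2)" using assms by (simp add: frac_le)
  have b: "1/(1-y1) \<le> 1/(1-y2)" using assms by (simp add: frac_le)
  have c: "1/(1-x1) \<ge> 1" "1/(1-y1) \<ge> 1" using assms by simp_all
  have "1/(1/(1-x2) + 1/(1-y2) - 1) \<le> 1/(1/(1-x1) + 1/(1-y1) - 1)"
    by (rule frac_le) (use a b c in auto)
  then show ?thesis
    using ratio_ident[of x1 y1] ratio_ident[of x2 y2] assms by simp
qed

lemma DC_eq:
  fixes l u dQ b :: real
  assumes "0 < b" "0 < dQ"
  shows "DeltaC l u dQ b = (2 - exp (-dQ/b) - exp (-(u-l-dQ)/b)) / (1 - exp (-dQ/b) * exp (-(u-l-dQ)/b))"
proof -
  have e: "exp (-(u-l)/b) = exp (-dQ/b) * exp (-(u-l-dQ)/b)"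
    using assms by (simp add: exp_add[symmetric] field_simps)
  have e2: "exp (- (u - (l + dQ)) / b) = exp (-(u-l-dQ)/b)" by (simp add: algebra_simps)
  have Cl: "Cp l u l b = (1 - exp (-dQ/b) * exp (-(u-l-dQ)/b))/2"
    unfolding Cp_def e[symmetric] by (simp add: field_simps)
  have Cq: "Cp l u (l+dQ) b = (2 - exp (-dQ/b) - exp (-(u-l-dQ)/b))/2"
    unfolding Cp_def e2 by (simp add: field_simps)
  have h: "\<And>a c::real. (a/2)/(c/2) = a/c" by simp
  show ?thesis unfolding DeltaC_def Cl Cq by (rule h)
qed

theorem theorem4p3:
  fixes l u dQ eps delta :: real
  assumes "l < u" and "0 < dQ" and "dQ \<le> u - l"
    and "0 \<le> eps" and "0 \<le> delta" and "delta < 1"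
    and "exp eps / (1 - delta) > 1"
  defines "b0 \<equiv> dQ / (eps - ln (1 - delta))"
  shows "(\<forall>b\<ge>b0. eps - ln (DeltaC l u dQ b) - ln (1 - delta) \<noteq> 0)
       \<and> continuous_on {b0..} (fmap l u dQ eps delta)
       \<and> (\<exists>!bs. bs \<in> {b0..fmap l u dQ eps delta b0} \<and> fmap l u dQ eps delta bs = bs)
       \<and> (\<forall>bs. bs \<in> {b0..fmap l u dQ eps delta b0} \<and> fmap l u dQ eps delta bs = bs \<longrightarrow>
             ((bs = b0 \<and> fmap l u dQ eps delta b0 = b0) \<longleftrightarrow> dQ = u - l))"
proof -
  define K where "K = eps - ln (1 - delta)"
  define f where "f = fmap l u dQ eps delta"
  define X where "X = (\<lambda>b::real. exp (-dQ/b))"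
  define Y where "Y = (\<lambda>b::real. exp (-(u-l-dQ)/b))"
  have "exp eps > 1 - delta" using assms(6,7) by (simp add: field_simps)
  hence "ln (1 - delta) < ln (exp eps)" using assms(6) by (subst ln_less_cancel_iff) auto
  hence "ln (1 - delta) < eps" by simp
  hence Kpos: "K > 0" unfolding K_def by simp
  have b0K: "b0 = dQ / K" unfolding b0_def K_def by simp
  have b0pos: "b0 > 0" using Kpos assms(2) b0K by simp
  have DC: "\<And>b. b > 0 \<Longrightarrow> DeltaC l u dQ b = (2 - X b - Y b)/(1 - X b * Y b)"
    using DC_eq assms(2) unfolding X_def Y_def by blast
  have X: "\<And>b. b > 0 \<Longrightarrow> 0 < X b \<and> X b < 1" unfolding X_def using assms(2) by simp
  have Y: "\<And>b. b > 0 \<Longrightarrow> 0 < Y b \<and> Y b \<le> 1" unfolding Y_def using assms(3)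
    by (simp add: divide_nonneg_pos divide_nonpos_pos)
  have Y1: "\<And>b. b > 0 \<Longrightarrow> dQ < u - l \<Longrightarrow> Y b < 1" unfolding Y_def
    by (simp add: divide_neg_pos)
  have Yeq: "\<And>b. dQ = u - l \<Longrightarrow> Y b = 1" unfolding Y_def by simp
  have DCge: "\<And>b. b > 0 \<Longrightarrow> DeltaC l u dQ b \<ge> 1"
    using DC X Y ratio_ge1 by simp
  have DCgt: "\<And>b. b > 0 \<Longrightarrow> dQ < u - l \<Longrightarrow> DeltaC l u dQ b > 1"
    using DC X Y Y1 ratio_gt1 by simp
  have DC1: "\<And>b. b > 0 \<Longrightarrow> dQ = u - l \<Longrightarrow> DeltaC l u dQ b = 1"
  proof -
    fix b :: real assume b: "b > 0" "dQ = u - l"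
    have "X b \<noteq> 1" using X[OF b(1)] by simp
    then show "DeltaC l u dQ b = 1" using DC[OF b(1)] Yeq[OF b(2)] by simp
  qed
  have DClt: "\<And>b. b > 0 \<Longrightarrow> ln (DeltaC l u dQ b) < dQ / b"
  proof -
    fix b :: real assume b: "b > 0"
    have "DeltaC l u dQ b < 1 / X b" using DC[OF b] X[OF b] Y[OF b] ratio_lt by simp
    also have "1 / X b = exp (dQ/b)" unfolding X_def by (simp add: exp_minus field_simps)
    finally have lt: "DeltaC l u dQ b < exp (dQ / b)" .
    have "0 < DeltaC l u dQ b" using DCge[OF b] by linarith
    hence "ln (DeltaC l u dQ b) < ln (exp (dQ / b))" using lt by (subst ln_less_cancel_iff) auto
    then show "ln (DeltaC l u dQ b) < dQ / b" by simp
  qed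
  have DCmono: "\<And>b1 b2. 0 < b1 \<Longrightarrow> b1 \<le> b2 \<Longrightarrow> DeltaC l u dQ b2 \<le> DeltaC l u dQ b1"
  proof -
    fix b1 b2 :: real assume b: "0 < b1" "b1 \<le> b2"
    show "DeltaC l u dQ b2 \<le> DeltaC l u dQ b1"
    proof (cases "dQ = u - l")
      case True then show ?thesis using DC1 b by simp
    next
      case False
      hence lt: "dQ < u - l" using assms(3) by simp
      have "X b1 \<le> X b2" unfolding X_def using b assms(2)
        by (simp add: frac_le)
      moreover have "Y b1 \<le> Y b2" unfolding Y_def using b lt
        by (simp add: divide_left_mono_neg)
      moreover have "b2 > 0" using b by simp
      ultimately show ?thesis using DC[of b1] DC[of b2] X[of b1] X[of b2] Y1[OF _ lt, of b1] Y1[OF _ lt, of b2] Y[of b1]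
          ratio_mono[of "X b1" "X b2" "Y b1" "Y b2"] b by simp
    qed
  qed
  define D where "D = (\<lambda>b. eps - ln (DeltaC l u dQ b) - ln (1 - delta))"
  have Dform: "\<And>b. D b = K - ln (DeltaC l u dQ b)" unfolding D_def K_def by simp
  have fD: "\<And>b. f b = dQ / D b" unfolding f_def fmap_def D_def by simp
  have Dpos: "\<And>b. b \<ge> b0 \<Longrightarrow> D b > 0"
  proof -
    fix b assume b: "b \<ge> b0"
    have bp: "b > 0" using b b0pos by simp
    have "dQ / b \<le> dQ / b0" using b b0pos assms(2) by (simp add: frac_le)
    also have "dQ / b0 = K" using b0K Kpos assms(2) by simp
    finally show "D b > 0" using DClt[OF bp] Dform by simp
  qed
  have DleK: "\<And>b. b > 0 \<Longrightarrow> D b \<le> K" using DCge Dform by simp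
  have fge: "\<And>b. b \<ge> b0 \<Longrightarrow> f b \<ge> b0"
    using Dpos DleK b0pos fD b0K assms(2) by (simp add: frac_le)
  have fmono: "\<And>b1 b2. b0 \<le> b1 \<Longrightarrow> b1 \<le> b2 \<Longrightarrow> f b2 \<le> f b1"
  proof -
    fix b1 b2 assume b: "b0 \<le> b1" "b1 \<le> b2"
    have p2: "0 < DeltaC l u dQ b2" using DCge[of b2] b b0pos by force
    have "ln (DeltaC l u dQ b2) \<le> ln (DeltaC l u dQ b1)"
      using DCmono[of b1 b2] b b0pos p2 by (subst ln_le_cancel_iff) auto
    hence "D b1 \<le> D b2" unfolding Dform by simp
    then show "f b2 \<le> f b1" unfolding fD using Dpos b assms(2) by (simp add: frac_le)
  qed
  have part1: "\<forall>b\<ge>b0. eps - ln (DeltaC l u dQ b) - ln (1 - delta) \<noteq> 0"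
    using Dpos unfolding D_def by force
  have cont: "continuous_on {b0..} f"
  proof -
    have pos: "\<And>b. b \<in> {b0..} \<Longrightarrow> b > 0" using b0pos by auto
    have cl: "\<And>b. b \<in> {b0..} \<Longrightarrow> Cp l u l b \<noteq> 0"
    proof -
      fix b :: real assume "b \<in> {b0..}"
      hence "b > 0" using b0pos by auto
      hence "exp (- (u - l) / b) < 1" using assms(1) by (simp add: divide_neg_pos)
      thus "Cp l u l b \<noteq> 0" unfolding Cp_def using \<open>b > 0\<close> assms(1) by auto
    qed
    have dcp: "\<And>b. b \<in> {b0..} \<Longrightarrow> DeltaC l u dQ b > 0" using DCge pos by force
    have "continuous_on {b0..} (\<lambda>b. Cp l u (l+dQ) b / Cp l u l b)"
      unfolding Cp_def using pos cl[unfolded Cp_def]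
      by (intro continuous_intros) auto
    hence "continuous_on {b0..} (\<lambda>b. DeltaC l u dQ b)" unfolding DeltaC_def .
    hence "continuous_on {b0..} (\<lambda>b. dQ / (eps - ln (DeltaC l u dQ b) - ln (1 - delta)))"
      using dcp Dpos unfolding D_def
      by (intro continuous_intros) (auto simp: less_imp_neq[symmetric])
    then show ?thesis unfolding f_def fmap_def .
  qed
  have fb0: "f b0 \<ge> b0" using fge by simp
  have ex: "\<exists>bs. bs \<in> {b0..f b0} \<and> f bs = bs"
  proof -
    have c2: "continuous_on {b0..f b0} (\<lambda>b. f b - b)"
      using cont by (intro continuous_intros) (auto intro: continuous_on_subset)
    have "f (f b0) \<le> f b0" using fmono[OF order_refl fb0] .
    then obtain x where "b0 \<le> x" "x \<le> f b0" "f x - x = 0"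
      using IVT2'[of "\<lambda>b. f b - b" "f b0" 0 b0, OF _ _ fb0 c2] fb0 by auto
    then show ?thesis by auto
  qed
  have uniq: "\<And>a c. a \<in> {b0..f b0} \<and> f a = a \<Longrightarrow> c \<in> {b0..f b0} \<and> f c = c \<Longrightarrow> a = c"
  proof -
    fix a c assume a: "a \<in> {b0..f b0} \<and> f a = a" and c: "c \<in> {b0..f b0} \<and> f c = c"
    show "a = c"
    proof (rule ccontr)
      assume "a \<noteq> c"
      then consider "a < c" | "c < a" by linarith
      then show False
      proof cases
        case 1 then show False using fmono[of a c] a c by auto
      next
        case 2 then show False using fmono[of c a] a c by auto
      qed
    qed
  qed
  have part3: "\<exists>!bs. bs \<in> {b0..f b0} \<and> f bs = bs" using ex uniq by blast
  have part4: "\<forall>bs. bs \<in> {b0..f b0} \<and> f bs = bs \<longrightarrow> ((bs = b0 \<and> f b0 = b0) \<longleftrightarrow> dQ = u - l)"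
  proof (intro allI impI)
    fix bs assume bs: "bs \<in> {b0..f b0} \<and> f bs = bs"
    show "(bs = b0 \<and> f b0 = b0) \<longleftrightarrow> dQ = u - l"
    proof
      assume h: "bs = b0 \<and> f b0 = b0"
      show "dQ = u - l"
      proof (rule ccontr)
        assume "dQ \<noteq> u - l"
        hence lt: "dQ < u - l" using assms(3) by simp
        have "D b0 < K" unfolding Dform using DCgt[OF b0pos lt] by simp
        moreover have "D b0 > 0" using Dpos[of b0] by simp
        ultimately have "dQ / K < dQ / D b0" using assms(2) by (simp add: frac_less2)
        hence "f b0 > b0" unfolding fD b0K[symmetric] by simp
        then show False using h by simp
      qed
    next
      assume eq: "dQ = u - l"
      have fc: "\<And>b. b > 0 \<Longrightarrow> f b = b0" unfolding fD Dform b0K using DC1 eq by simp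
      have "bs > 0" using bs b0pos by auto
      hence "f bs = b0" by (rule fc)
      hence e1: "bs = b0" using bs by simp
      have "f b0 = b0" using fc[OF b0pos] .
      then show "bs = b0 \<and> f b0 = b0" using e1 by simp
    qed
  qed
  show ?thesis using part1 cont part3 part4 unfolding f_def by blast
qed

end
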